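(* If $B\subset\mathbb{R}$ has the Baire property, then the characteristic function $\chi_B$ of $B$ is the pointwise limit of a sequence of Świątkowski functions.
   Context: $\mathrm{C}(f)$ denotes the set of continuity points of $f$. $f\colon\mathbb{R}\to\mathbb{R}$ is a Świątkowski function if for all $a<b$ with $f(a)\ne f(b)$ there is $x\in(a,b)\cap\mathrm{C}(f)$ with $f(x)$ strictly between $f(a)$ and $f(b)$. A set has the Baire property if it is of the form $O\triangle M$ with $O$ open and $M$ meager. *)

theory Defs
  imports "HOL-Analysis.Analysis"
begin

definition cont_points :: "(real \<Rightarrow> real) \<Rightarrow> real set" where
  "cont_points f = {x. isCont f x}"

definition swiatkowski :: "(real \<Rightarrow> real) \<Rightarrow> bool" where
  "swiatkowski f \<longleftrightarrow>
     (\<forall>a b. a < b \<and> f a \<noteq> f b \<longrightarrow>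
        (\<exists>x\<in>{a<..<b} \<inter> cont_points f.
           min (f a) (f b) < f x \<and> f x < max (f a) (f b)))"

definition nowhere_dense :: "'a::topological_space set \<Rightarrow> bool" where
  "nowhere_dense S \<longleftrightarrow> interior (closure S) = {}"

definition meager :: "'a::topological_space set \<Rightarrow> bool" where
  "meager M \<longleftrightarrow> (\<exists>F. countable F \<and> (\<forall>N\<in>F. nowhere_dense N) \<and> M = \<Union>F)"

definition baire_property :: "'a::topological_space set \<Rightarrow> bool" where
  "baire_property B \<longleftrightarrow> (\<exists>U M. open U \<and> meager M \<and> B = (U - M) \<union> (M - U))"

end

theory Submission
  imports Defs
begin


definition phi :: "real \<Rightarrow> real" where "phi t = (sin (1/t))^2 / (1+t)"

lemma phi_bounds: "t > 0 \<Longrightarrow> 0 \<le> phi t \<and> phi t < 1"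
proof -
  assume t: "t > 0"
  have "(sin (1/t))^2 \<le> 1" by (simp add: abs_square_le_1)
  then show ?thesis using t unfolding phi_def by (auto simp: divide_simps)
qed

lemma phi_cont: "t > 0 \<Longrightarrow> isCont phi t"
  unfolding phi_def by (intro continuous_intros) auto

lemma phi_zero: "\<delta> > 0 \<Longrightarrow> \<exists>\<tau>. 0 < \<tau> \<and> \<tau> < \<delta> \<and> phi \<tau> = 0"
proof -
  assume d: "\<delta> > 0"
  obtain k :: nat where k: "k > 0" "inverse (real k) < \<delta>" using ex_inverse_of_nat_less d by blast
  have pi3: "pi > 1" using pi_gt3 by linarith
  define \<tau> where "\<tau> = 1 / (real k * pi)"
  have "\<tau> > 0" using k pi_gt_zero unfolding \<tau>_def by simp
  moreover have "\<tau> < \<delta>"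
  proof -
    have "real k * pi \<ge> real k" using k pi3 by simp
    hence "\<tau> \<le> inverse (real k)" unfolding \<tau>_def using k by (simp add: divide_simps)
    thus ?thesis using k by linarith
  qed
  moreover have "phi \<tau> = 0" unfolding phi_def \<tau>_def by simp
  ultimately show ?thesis by blast
qed

lemma phi_big: "\<delta> > 0 \<Longrightarrow> c < 1 \<Longrightarrow> \<exists>\<tau>. 0 < \<tau> \<and> \<tau> < \<delta> \<and> phi \<tau> > c"
proof -
  assume d: "\<delta> > 0" and c: "c < 1"
  obtain k :: nat where k: "k > 0" "inverse (real k) < min \<delta> (1 - c)"
    using ex_inverse_of_nat_less[of "min \<delta> (1-c)"] d c by auto
  have pi3: "pi > 1" using pi_gt3 by linarith
  define \<tau> where "\<tau> = 1 / (2 * real k * pi + pi/2)"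
  have pos: "2 * real k * pi + pi/2 > 0" using pi_gt_zero by (simp add: add_nonneg_pos)
  have "\<tau> > 0" using pos unfolding \<tau>_def by simp
  moreover have le: "\<tau> \<le> inverse (real k)"
  proof -
    have "real k \<le> real k * pi" using pi3 by (simp add: mult_le_cancel_left1)
    hence "2 * real k * pi + pi/2 \<ge> real k" using pi_gt_zero by linarith
    thus ?thesis unfolding \<tau>_def using k by (simp add: divide_simps)
  qed
  moreover have "sin (1/\<tau>) = 1"
  proof -
    have "1/\<tau> = pi/2 + real (2*k) * pi" unfolding \<tau>_def by simp
    hence "sin (1/\<tau>) = sin (pi/2 + real (2*k) * pi)" by simp
    also have "\<dots> = cos (real (2*k) * pi)" by (simp add: sin_add)
    also have "\<dots> = 1" by simp
    finally show ?thesis .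
  qed
  hence "phi \<tau> = 1/(1+\<tau>)" unfolding phi_def by simp
  moreover have "1/(1+\<tau>) > c"
  proof -
    have "\<tau> < 1 - c" using le k by linarith
    have "c * (1+\<tau>) < 1"
    proof (cases "c \<le> 0")
      case True
      hence "c * (1+\<tau>) \<le> 0" using \<open>\<tau>>0\<close> by (simp add: mult_nonpos_nonneg)
      thus ?thesis by linarith
    next
      case False
      hence "c * \<tau> < \<tau>" using \<open>\<tau>>0\<close> c by simp
      thus ?thesis using \<open>\<tau> < 1 - c\<close> by (simp add: distrib_left)
    qed
    thus ?thesis using \<open>\<tau>>0\<close> by (simp add: divide_simps)
  qed
  moreover have "\<tau> < \<delta>" using le k(2) by linarith
  ultimately show ?thesis by auto
qed

lemma IVT_any:
  fixes f :: "real \<Rightarrow> real"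
  assumes c: "\<forall>x\<in>{min p q..max p q}. isCont f x"
    and y: "min (f p) (f q) \<le> y" "y \<le> max (f p) (f q)"
  shows "\<exists>x\<in>{min p q..max p q}. f x = y"
proof (cases "p \<le> q")
  case True
  have co: "continuous_on {p..q} f" using c True by (intro continuous_at_imp_continuous_on) auto
  show ?thesis
  proof (cases "f p \<le> f q")
    case True
    then obtain x where "p \<le> x" "x \<le> q" "f x = y" using IVT'[OF _ _ \<open>p\<le>q\<close> co, of y] y by auto
    thus ?thesis using \<open>p\<le>q\<close> by auto
  next
    case False
    then obtain x where "p \<le> x" "x \<le> q" "f x = y" using IVT2'[OF _ _ \<open>p\<le>q\<close> co, of y] y by auto
    thus ?thesis using \<open>p\<le>q\<close> by auto
  qed
next
  case False
  hence pq: "q \<le> p" by simp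
  have co: "continuous_on {q..p} f" using c pq by (intro continuous_at_imp_continuous_on) auto
  show ?thesis
  proof (cases "f q \<le> f p")
    case True
    then obtain x where "q \<le> x" "x \<le> p" "f x = y" using IVT'[OF _ _ pq co, of y] y by auto
    thus ?thesis using pq by auto
  next
    case False
    then obtain x where "q \<le> x" "x \<le> p" "f x = y" using IVT2'[OF _ _ pq co, of y] y by auto
    thus ?thesis using pq by auto
  qed
qed

lemma choose_between:
  fixes l h u v :: real
  assumes "l < h" "l \<le> u" "u \<le> h" "u = l \<longrightarrow> v > u" "u = h \<longrightarrow> v < u" "u \<noteq> v"
  shows "\<exists>y. l < y \<and> y < h \<and> min u v < y \<and> y < max u v"
proof -
  define w where "w = max l (min h v)"
  have "w \<noteq> u" using assms unfolding w_def by (auto simp: max_def min_def)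
  hence "l < (u+w)/2 \<and> (u+w)/2 < h \<and> min u v < (u+w)/2 \<and> (u+w)/2 < max u v"
    using assms unfolding w_def by (auto simp: max_def min_def)
  thus ?thesis by blast
qed

lemma interior_frontier_open:
  fixes U :: "'a::real_normed_vector set"
  assumes "open U" shows "interior (frontier U) = {}"
proof -
  have "frontier U = closure U - U" using assms by (simp add: frontier_def interior_open)
  moreover have "interior (closure U - U) = {}"
  proof (rule ccontr)
    assume "interior (closure U - U) \<noteq> {}"
    then obtain x where x: "x \<in> interior (closure U - U)" by auto
    have "interior (closure U - U) \<inter> U = {}" using interior_subset by blast
    hence "interior (closure U - U) \<inter> closure U = {}" using open_Int_closure_eq_empty by blast
    thus False using x interior_subset by blast
  qed
  ultimately show ?thesis by simp
qed



locale sw =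
  fixes N U :: "real set" and e :: real and h :: "real \<Rightarrow> real"
  assumes clN: "closed N" and intN: "interior N = {}" and frU: "frontier U \<subseteq> N"
    and opU: "open U" and zN: "0 \<in> N" and e0: "0 < e" and e1: "e < 1"
    and h01: "\<And>x. h x = 0 \<or> h x = 1"
begin

definition f :: "real \<Rightarrow> real" where
  "f x = (if x \<in> N then h x else if x \<in> U then 1 - e * phi (infdist x N) else e * phi (infdist x N))"

lemma rho_pos: "x \<notin> N \<Longrightarrow> infdist x N > 0"
  using infdist_pos_not_in_closed[OF clN _] zN by blast

lemma f_outU: "x \<notin> N \<Longrightarrow> x \<notin> U \<Longrightarrow> 0 \<le> f x \<and> f x < e"
proof -
  assume a: "x \<notin> N" "x \<notin> U"
  have "0 \<le> phi (infdist x N)" "phi (infdist x N) < 1" using phi_bounds[OF rho_pos[OF a(1)]] by auto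
  thus ?thesis using a e0 unfolding f_def by (simp add: mult_less_cancel_left1)
qed

lemma f_inU: "x \<notin> N \<Longrightarrow> x \<in> U \<Longrightarrow> 1 - e < f x \<and> f x \<le> 1"
proof -
  assume a: "x \<notin> N" "x \<in> U"
  have "0 \<le> phi (infdist x N)" "phi (infdist x N) < 1" using phi_bounds[OF rho_pos[OF a(1)]] by auto
  thus ?thesis using a e0 unfolding f_def by (simp add: mult_less_cancel_left1)
qed

lemma f_range: "0 \<le> f x \<and> f x \<le> 1"
proof (cases "x \<in> N")
  case True thus ?thesis using h01[of x] unfolding f_def by auto
next
  case False thus ?thesis using f_outU f_inU e1 by (cases "x \<in> U") fastforce+
qed

lemma g_cont: "x \<notin> N \<Longrightarrow> isCont (\<lambda>y. phi (infdist y N)) x"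
proof -
  assume "x \<notin> N"
  have "isCont (\<lambda>y. infdist y N) x" by (intro continuous_intros)
  thus ?thesis using isCont_o2 phi_cont rho_pos \<open>x\<notin>N\<close> by blast
qed

lemma f_cont: "x \<notin> N \<Longrightarrow> isCont f x"
proof -
  assume xN: "x \<notin> N"
  show ?thesis
  proof (cases "x \<in> U")
    case True
    have ev: "eventually (\<lambda>y. f y = 1 - e * phi (infdist y N)) (nhds x)"
      unfolding eventually_nhds
      by (rule exI[of _ "U - N"]) (use True xN opU clN in \<open>auto simp: f_def\<close>)
    have ic: "isCont (\<lambda>y. 1 - e * phi (infdist y N)) x"
      using g_cont[OF xN] by (intro continuous_intros)
    show ?thesis using isCont_cong[OF ev] ic by simp
  next
    case False
    have "x \<notin> closure U" using False xN frU unfolding frontier_def using interior_open[OF opU] by auto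
    have ev: "eventually (\<lambda>y. f y = e * phi (infdist y N)) (nhds x)"
      unfolding eventually_nhds
      apply (rule exI[of _ "- (closure U \<union> N)"])
      using \<open>x \<notin> closure U\<close> xN clN closure_subset by (auto simp: f_def)
    have ic: "isCont (\<lambda>y. e * phi (infdist y N)) x"
      using g_cont[OF xN] by (intro continuous_intros)
    show ?thesis using isCont_cong[OF ev] ic by simp
  qed
qed


lemma piece:
  assumes st: "s < t" and w: "w \<in> {s..t}" "w \<notin> N" and SN: "{s<..<t} \<inter> N = {}"
    and small: "\<forall>\<delta>>0. \<exists>z\<in>{s<..<t}. infdist z N < \<delta>"
  shows "(w \<notin> U \<and> (\<forall>y. 0 < y \<and> y < e \<longrightarrow> (\<exists>z\<in>{s<..<t}. f z = y)))
       \<or> (w \<in> U \<and> (\<forall>y. 1 - e < y \<and> y < 1 \<longrightarrow> (\<exists>z\<in>{s<..<t}. f z = y)))"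
proof -
  define S where "S = {s<..<t} \<union> {w}"
  have SN': "S \<inter> N = {}" using SN w unfolding S_def by auto
  have "is_interval S" unfolding is_interval_1 S_def using w by auto
  hence conS: "connected S" using is_interval_connected_1 by blast
  have "S \<inter> frontier U = {}" using SN' frU by blast
  hence UU: "S \<inter> U = {} \<or> S - U = {}" using connected_Int_frontier[OF conS] by blast
  define w0 where "w0 = (s+t)/2"
  have w0: "w0 \<in> {s<..<t}" using st unfolding w0_def by auto
  define r0 where "r0 = infdist w0 N"
  have r0: "r0 > 0" unfolding r0_def using rho_pos w0 SN by blast
  have hit: "\<exists>z\<in>{s<..<t}. infdist z N = \<tau>" if tau: "0 < \<tau>" "\<tau> < r0" for \<tau>
  proof -
    obtain z' where z': "z' \<in> {s<..<t}" "infdist z' N < \<tau>" using small tau by blast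
    have "\<forall>x\<in>{min w0 z'..max w0 z'}. isCont (\<lambda>y. infdist y N) x" by (intro ballI continuous_intros)
    then obtain z where z: "z \<in> {min w0 z'..max w0 z'}" "infdist z N = \<tau>"
      using IVT_any[of w0 z' "\<lambda>y. infdist y N" \<tau>] z' tau unfolding r0_def by auto
    have "z \<in> {s<..<t}" using z(1) z'(1) w0 by auto
    thus ?thesis using z(2) by blast
  qed
  obtain z1 where z1: "z1 \<in> {s<..<t}" "phi (infdist z1 N) = 0"
  proof -
    obtain \<tau> where ta: "0 < \<tau>" "\<tau> < r0" "phi \<tau> = 0" using phi_zero r0 by blast
    obtain z where "z \<in> {s<..<t}" "infdist z N = \<tau>" using hit[OF ta(1,2)] by blast
    thus ?thesis using that ta(3) by simp
  qed
  have big: "\<exists>z\<in>{s<..<t}. phi (infdist z N) > c" if c1: "c < 1" for c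
  proof -
    obtain \<tau> where ta: "0 < \<tau>" "\<tau> < r0" "phi \<tau> > c" using phi_big[OF r0 c1] by blast
    obtain z where z: "z \<in> {s<..<t}" "infdist z N = \<tau>" using hit[OF ta(1,2)] by blast
    have "phi (infdist z N) > c" using ta(3) z(2) by simp
    thus ?thesis using z(1) by blast
  qed
  have contS: "\<forall>x\<in>{min z z'..max z z'}. isCont f x" if "z \<in> {s<..<t}" "z' \<in> {s<..<t}" for z z'
  proof
    fix x assume "x \<in> {min z z'..max z z'}"
    hence "x \<in> {s<..<t}" using that by auto
    thus "isCont f x" using f_cont SN by blast
  qed
  show ?thesis
  proof (cases "w \<in> U")
    case False
    hence SU: "{s<..<t} \<inter> U = {}" using UU unfolding S_def by auto
    have fz: "f z = e * phi (infdist z N)" if "z \<in> {s<..<t}" for z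
      using that SU SN unfolding f_def by auto
    have "\<exists>z\<in>{s<..<t}. f z = y" if y: "0 < y" "y < e" for y
    proof -
      obtain z2 where z2: "z2 \<in> {s<..<t}" "phi (infdist z2 N) > y / e"
        using big[of "y/e"] y e0 by (auto simp: divide_less_eq)
      have "f z2 > y" using fz[OF z2(1)] z2(2) e0 by (simp add: divide_less_eq mult.commute)
      moreover have "f z1 = 0" using fz[OF z1(1)] z1(2) by simp
      ultimately obtain z where "z \<in> {min z1 z2..max z1 z2}" "f z = y"
        using IVT_any[OF contS[OF z1(1) z2(1)], of y] y by auto
      moreover have "z \<in> {s<..<t}" using calculation(1) z1(1) z2(1) by auto
      ultimately show ?thesis by blast
    qed
    thus ?thesis using False by blast
  next
    case True
    hence SU: "{s<..<t} \<subseteq> U" using UU unfolding S_def by auto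
    have fz: "f z = 1 - e * phi (infdist z N)" if "z \<in> {s<..<t}" for z
      using that SU SN unfolding f_def by auto
    have "\<exists>z\<in>{s<..<t}. f z = y" if y: "1 - e < y" "y < 1" for y
    proof -
      obtain z2 where z2: "z2 \<in> {s<..<t}" "phi (infdist z2 N) > (1 - y) / e"
        using big[of "(1-y)/e"] y e0 by (auto simp: divide_less_eq)
      have "e * phi (infdist z2 N) > 1 - y" using z2(2) e0 by (simp add: divide_less_eq mult.commute)
      hence "f z2 < y" using fz[OF z2(1)] by simp
      moreover have "f z1 = 1" using fz[OF z1(1)] z1(2) by simp
      ultimately obtain z where "z \<in> {min z1 z2..max z1 z2}" "f z = y"
        using IVT_any[OF contS[OF z1(1) z2(1)], of y] y by auto
      moreover have "z \<in> {s<..<t}" using calculation(1) z1(1) z2(1) by auto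
      ultimately show ?thesis by blast
    qed
    thus ?thesis using True by blast
  qed
qed




lemma small_left: "a < q \<Longrightarrow> q \<in> N \<Longrightarrow> \<forall>\<delta>>0. \<exists>z\<in>{a<..<q}. infdist z N < \<delta>"
proof (intro allI impI)
  fix \<delta> :: real assume aq: "a < q" "q \<in> N" and d: "\<delta> > 0"
  define mm where "mm = min \<delta> (q - a)"
  define z where "z = q - mm / 2"
  have "infdist z N \<le> dist z q" using infdist_le[OF aq(2)] .
  also have "dist z q = mm / 2" unfolding z_def mm_def dist_real_def using aq d by auto
  also have "\<dots> < \<delta>" using d aq unfolding mm_def by auto
  finally have "infdist z N < \<delta>" .
  moreover have m: "0 < mm" "mm \<le> q - a" using aq d unfolding mm_def by auto
  moreover have "a < z" unfolding z_def using m by linarith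
  moreover have "z < q" unfolding z_def using m by linarith
  moreover have "z \<in> {a<..<q}" using calculation(4,5) by simp
  ultimately show "\<exists>z\<in>{a<..<q}. infdist z N < \<delta>" by blast
qed

lemma small_right: "q < b \<Longrightarrow> q \<in> N \<Longrightarrow> \<forall>\<delta>>0. \<exists>z\<in>{q<..<b}. infdist z N < \<delta>"
proof (intro allI impI)
  fix \<delta> :: real assume aq: "q < b" "q \<in> N" and d: "\<delta> > 0"
  define mm where "mm = min \<delta> (b - q)"
  define z where "z = q + mm / 2"
  have "infdist z N \<le> dist z q" using infdist_le[OF aq(2)] .
  also have "dist z q = mm / 2" unfolding z_def mm_def dist_real_def using aq d by auto
  also have "\<dots> < \<delta>" using d aq unfolding mm_def by auto
  finally have "infdist z N < \<delta>" .
  moreover have m: "0 < mm" "mm \<le> b - q" using aq d unfolding mm_def by auto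
  moreover have "q < z" unfolding z_def using m by linarith
  moreover have "z < b" unfolding z_def using m by linarith
  moreover have "z \<in> {q<..<b}" using calculation(4,5) by simp
  ultimately show "\<exists>z\<in>{q<..<b}. infdist z N < \<delta>" by blast
qed

lemma inf_piece:
  assumes "a \<notin> N" "N \<inter> {a..b} \<noteq> {}"
  shows "\<exists>q. q \<in> N \<and> a < q \<and> q \<le> b \<and> {a<..<q} \<inter> N = {}"
proof -
  define q where "q = Inf (N \<inter> {a..b})"
  have bb: "bdd_below (N \<inter> {a..b})" by (rule bdd_belowI[of _ a]) auto
  have "closed (N \<inter> {a..b})" using clN by (intro closed_Int) auto
  hence qN: "q \<in> N \<inter> {a..b}" unfolding q_def by (rule closed_contains_Inf[OF assms(2) bb])
  hence aq: "a < q" using assms(1) by (cases "q = a") auto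
  have "{a<..<q} \<inter> N = {}"
  proof (rule ccontr)
    assume "{a<..<q} \<inter> N \<noteq> {}"
    then obtain z where z: "a < z" "z < q" "z \<in> N" by auto
    hence "z \<in> N \<inter> {a..b}" using qN by auto
    hence "q \<le> z" unfolding q_def by (rule cInf_lower[OF _ bb])
    thus False using z by simp
  qed
  thus ?thesis using qN aq by auto
qed

lemma sup_piece:
  assumes "b \<notin> N" "N \<inter> {a..b} \<noteq> {}"
  shows "\<exists>q. q \<in> N \<and> a \<le> q \<and> q < b \<and> {q<..<b} \<inter> N = {}"
proof -
  define q where "q = Sup (N \<inter> {a..b})"
  have bb: "bdd_above (N \<inter> {a..b})" by (rule bdd_aboveI[of _ b]) auto
  have "closed (N \<inter> {a..b})" using clN by (intro closed_Int) auto
  hence qN: "q \<in> N \<inter> {a..b}" unfolding q_def by (rule closed_contains_Sup[OF assms(2) bb])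
  hence aq: "q < b" using assms(1) by (cases "q = b") auto
  have "{q<..<b} \<inter> N = {}"
  proof (rule ccontr)
    assume "{q<..<b} \<inter> N \<noteq> {}"
    then obtain z where z: "q < z" "z < b" "z \<in> N" by auto
    hence "z \<in> N \<inter> {a..b}" using qN by auto
    hence "z \<le> q" unfolding q_def by (rule cSup_upper[OF _ bb])
    thus False using z by simp
  qed
  thus ?thesis using qN aq by auto
qed



lemma keyA1:
  assumes ab: "a < b" "f a \<noteq> f b" and A: "a \<notin> N" and True: "N \<inter> {a..b} = {}"
  shows "\<exists>x. a < x \<and> x < b \<and> x \<notin> N \<and> min (f a) (f b) < f x \<and> f x < max (f a) (f b)"
proof -
      define m where "m = (f a + f b)/2"
      have "\<forall>x\<in>{min a b..max a b}. isCont f x" using True f_cont ab by auto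
      moreover have "min (f a) (f b) \<le> m" "m \<le> max (f a) (f b)" unfolding m_def by auto
      ultimately obtain x where x: "x \<in> {min a b..max a b}" "f x = m"
        using IVT_any[where f=f and y=m and p=a and q=b] by blast
      have "x \<noteq> a" "x \<noteq> b" using x(2) ab(2) unfolding m_def by auto
      hence xab: "a < x" "x < b" using x(1) ab(1) by auto
      moreover have "x \<notin> N" using True xab by auto
      moreover have "min (f a) (f b) < f x" "f x < max (f a) (f b)"
        using x(2) ab(2) unfolding m_def by auto
      ultimately show ?thesis by blast

qed



lemma keyA2:
  assumes ab: "a < b" "f a \<noteq> f b" and A: "a \<notin> N" and False: "N \<inter> {a..b} \<noteq> {}"
  shows "\<exists>x. a < x \<and> x < b \<and> x \<notin> N \<and> min (f a) (f b) < f x \<and> f x < max (f a) (f b)"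
proof -
      obtain q where q: "q \<in> N" "a < q" "q \<le> b" "{a<..<q} \<inter> N = {}"
        using inf_piece[OF A False] by blast
      have P: "(a \<notin> U \<and> (\<forall>y. 0 < y \<and> y < e \<longrightarrow> (\<exists>z\<in>{a<..<q}. f z = y)))
       \<or> (a \<in> U \<and> (\<forall>y. 1 - e < y \<and> y < 1 \<longrightarrow> (\<exists>z\<in>{a<..<q}. f z = y)))"
        using piece[OF q(2) _ A q(4) small_left[OF q(2,1)]] q(2) by auto
      have fb: "0 \<le> f b" "f b \<le> 1" using f_range by auto
      obtain y where y: "min (f a) (f b) < y" "y < max (f a) (f b)" "\<exists>z\<in>{a<..<q}. f z = y"
      proof (cases "a \<in> U")
        case False
        have fa: "0 \<le> f a" "f a < e" using f_outU[OF A False] by auto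
        obtain y where yy: "0 < y" "y < e" "min (f a) (f b) < y" "y < max (f a) (f b)"
          using choose_between[of 0 e "f a" "f b"] e0 fa fb ab(2) by fastforce
        have H: "\<forall>y. 0 < y \<and> y < e \<longrightarrow> (\<exists>z\<in>{a<..<q}. f z = y)" using P False by auto
        have "\<exists>z\<in>{a<..<q}. f z = y" using H[rule_format, of y] yy(1,2) by simp
        thus ?thesis using that yy(3,4) by blast
      next
        case True
        have fa: "1 - e < f a" "f a \<le> 1" using f_inU[OF A True] by auto
        obtain y where yy: "1 - e < y" "y < 1" "min (f a) (f b) < y" "y < max (f a) (f b)"
          using choose_between[of "1-e" 1 "f a" "f b"] fa fb e0 e1 ab(2) by fastforce
        have H: "\<forall>y. 1 - e < y \<and> y < 1 \<longrightarrow> (\<exists>z\<in>{a<..<q}. f z = y)" using P True by auto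
        have "\<exists>z\<in>{a<..<q}. f z = y" using H[rule_format, of y] yy(1,2) by simp
        thus ?thesis using that yy(3,4) by blast
      qed
      then obtain z where z: "z \<in> {a<..<q}" "f z = y" by blast
      have "z \<notin> N" using q(4) z(1) by auto
      moreover have "a < z" "z < b" using z(1) q(3) by auto
      ultimately show ?thesis using y(1,2) z(2) by blast

qed



lemma keyB:
  assumes ab: "a < b" "f a \<noteq> f b" and B: "a \<in> N" "b \<notin> N"
  shows "\<exists>x. a < x \<and> x < b \<and> x \<notin> N \<and> min (f a) (f b) < f x \<and> f x < max (f a) (f b)"
proof -
    have NE: "N \<inter> {a..b} \<noteq> {}" using B ab by auto
    obtain q where q: "q \<in> N" "a \<le> q" "q < b" "{q<..<b} \<inter> N = {}"
      using sup_piece[OF B(2) NE] by blast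
    have P: "(b \<notin> U \<and> (\<forall>y. 0 < y \<and> y < e \<longrightarrow> (\<exists>z\<in>{q<..<b}. f z = y)))
       \<or> (b \<in> U \<and> (\<forall>y. 1 - e < y \<and> y < 1 \<longrightarrow> (\<exists>z\<in>{q<..<b}. f z = y)))"
      using piece[OF q(3) _ B(2) q(4) small_right[OF q(3,1)]] q(3) by auto
    have fa: "0 \<le> f a" "f a \<le> 1" using f_range by auto
    have ab': "f b \<noteq> f a" using ab(2) by simp
    obtain y where y: "min (f a) (f b) < y" "y < max (f a) (f b)" "\<exists>z\<in>{q<..<b}. f z = y"
    proof (cases "b \<in> U")
      case False
      have fb: "0 \<le> f b" "f b < e" using f_outU[OF B(2) False] by auto
      obtain y where yy: "0 < y" "y < e" "min (f b) (f a) < y" "y < max (f b) (f a)"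
        using choose_between[of 0 e "f b" "f a"] e0 fa fb ab' by fastforce
      have H: "\<forall>y. 0 < y \<and> y < e \<longrightarrow> (\<exists>z\<in>{q<..<b}. f z = y)" using P False by auto
      have "\<exists>z\<in>{q<..<b}. f z = y" using H[rule_format, of y] yy(1,2) by simp
      moreover have "min (f a) (f b) < y" "y < max (f a) (f b)" using yy(3,4) by (simp_all add: min.commute max.commute)
      ultimately show ?thesis using that by blast
    next
      case True
      have fb: "1 - e < f b" "f b \<le> 1" using f_inU[OF B(2) True] by auto
      obtain y where yy: "1 - e < y" "y < 1" "min (f b) (f a) < y" "y < max (f b) (f a)"
        using choose_between[of "1-e" 1 "f b" "f a"] fa fb e0 e1 ab' by fastforce
      have H: "\<forall>y. 1 - e < y \<and> y < 1 \<longrightarrow> (\<exists>z\<in>{q<..<b}. f z = y)" using P True by auto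
      have "\<exists>z\<in>{q<..<b}. f z = y" using H[rule_format, of y] yy(1,2) by simp
      moreover have "min (f a) (f b) < y" "y < max (f a) (f b)" using yy(3,4) by (simp_all add: min.commute max.commute)
      ultimately show ?thesis using that by blast
    qed
    then obtain z where z: "z \<in> {q<..<b}" "f z = y" by blast
    have "z \<notin> N" using q(4) z(1) by auto
    moreover have "a < z" "z < b" using z(1) q(2) by auto
    ultimately show ?thesis using y(1,2) z(2) by blast

qed



lemma keyC:
  assumes ab: "a < b" "f a \<noteq> f b" and C: "a \<in> N" "b \<in> N"
  shows "\<exists>x. a < x \<and> x < b \<and> x \<notin> N \<and> min (f a) (f b) < f x \<and> f x < max (f a) (f b)"
proof -
    have fab: "min (f a) (f b) = 0" "max (f a) (f b) = 1"
      using C ab(2) h01[of a] h01[of b] unfolding f_def by auto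
    obtain y0 where y0: "a < y0" "y0 < b" "y0 \<notin> N"
    proof (rule ccontr)
      assume nt: "\<not> thesis"
      have "{a<..<b} \<subseteq> N"
      proof
        fix x assume x: "x \<in> {a<..<b}"
        show "x \<in> N"
        proof (rule ccontr)
          assume "x \<notin> N" thus False using that[of x] x nt by auto
        qed
      qed
      hence "{a<..<b} \<subseteq> interior N" by (intro interior_maximal) auto
      moreover have "(a+b)/2 \<in> {a<..<b}" using ab by auto
      ultimately show False using intN by auto
    qed
    have NE: "N \<inter> {a..y0} \<noteq> {}" using C y0 by auto
    obtain q where q: "q \<in> N" "a \<le> q" "q < y0" "{q<..<y0} \<inter> N = {}"
      using sup_piece[OF y0(3) NE] by blast
    have P: "(y0 \<notin> U \<and> (\<forall>y. 0 < y \<and> y < e \<longrightarrow> (\<exists>z\<in>{q<..<y0}. f z = y)))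
       \<or> (y0 \<in> U \<and> (\<forall>y. 1 - e < y \<and> y < 1 \<longrightarrow> (\<exists>z\<in>{q<..<y0}. f z = y)))"
      using piece[OF q(3) _ y0(3) q(4) small_right[OF q(3,1)]] q(3) by auto
    obtain z where z: "z \<in> {q<..<y0}" "0 < f z" "f z < 1"
    proof (cases "y0 \<in> U")
      case False
      hence H: "\<forall>y. 0 < y \<and> y < e \<longrightarrow> (\<exists>z\<in>{q<..<y0}. f z = y)" using P by auto
      obtain z where "z \<in> {q<..<y0}" "f z = e/2" using H[rule_format, of "e/2"] e0 by auto
      thus ?thesis using that e0 e1 by auto
    next
      case True
      hence H: "\<forall>y. 1 - e < y \<and> y < 1 \<longrightarrow> (\<exists>z\<in>{q<..<y0}. f z = y)" using P by auto
      obtain z where "z \<in> {q<..<y0}" "f z = 1 - e/2" using H[rule_format, of "1 - e/2"] e0 by auto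
      thus ?thesis using that e0 e1 by auto
    qed
    have "z \<notin> N" using q(4) z(1) by auto
    moreover have "a < z" "z < b" using z(1) q(2) y0 by auto
    ultimately show ?thesis using z(2,3) fab by (intro exI[of _ z]) simp

qed


lemma key:
  assumes ab: "a < b" "f a \<noteq> f b"
  shows "\<exists>x. a < x \<and> x < b \<and> x \<notin> N \<and> min (f a) (f b) < f x \<and> f x < max (f a) (f b)"
proof (cases "a \<in> N")
  case True
  thus ?thesis using keyB[OF ab] keyC[OF ab] by blast
next
  case False
  thus ?thesis using keyA1[OF ab] keyA2[OF ab] by blast
qed
lemma swiat: "swiatkowski f"
  unfolding swiatkowski_def cont_points_def
proof (intro allI impI)
  fix a b assume "a < b \<and> f a \<noteq> f b"
  then obtain x where "a < x" "x < b" "x \<notin> N" "min (f a) (f b) < f x" "f x < max (f a) (f b)"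
    using key by blast
  thus "\<exists>x\<in>{a<..<b} \<inter> {x. isCont f x}. min (f a) (f b) < f x \<and> f x < max (f a) (f b)"
    using f_cont by auto
qed


end

theorem mainTheorem6:
  fixes B :: "real set"
  assumes "baire_property B"
  shows "\<exists>f :: nat \<Rightarrow> real \<Rightarrow> real. (\<forall>n. swiatkowski (f n)) \<and>
           (\<forall>x. (\<lambda>n. f n x) \<longlonglongrightarrow> indicator B x)"
proof -
  obtain U M where U: "open U" and Mm: "meager M" and BUM: "B = (U - M) \<union> (M - U)"
    using assms unfolding baire_property_def by blast
  obtain F where F: "countable F" "\<forall>N\<in>F. nowhere_dense N" "M = \<Union>F"
    using Mm unfolding meager_def by blast
  define F' where "F' = insert {} F"
  have F'ne: "F' \<noteq> {}" and cF': "countable F'" unfolding F'_def using F by auto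
  define D where "D = from_nat_into F'"
  have rD: "range D = F'" unfolding D_def using range_from_nat_into[OF F'ne cF'] .
  have Dint: "interior (closure (D k)) = {}" for k
  proof -
    have "D k \<in> F'" using rD by auto
    then consider "D k = {}" | "D k \<in> F" unfolding F'_def by auto
    thus ?thesis using F(2) unfolding nowhere_dense_def by cases auto
  qed
  define P where "P n = (\<Union>k\<le>n. closure (D k))" for n
  have Pcl: "closed (P n)" for n unfolding P_def by (intro closed_UN) auto
  have Pint: "interior (P n) = {}" for n
  proof (induction n)
    case 0 thus ?case unfolding P_def using Dint by simp
  next
    case (Suc n)
    have "P (Suc n) = closure (D (Suc n)) \<union> P n" unfolding P_def by (auto simp: atMost_Suc)
    thus ?case using interior_closed_Un_empty_interior[of "closure (D (Suc n))" "P n"] Suc Dint by simp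
  qed
  define NN where "NN n = frontier U \<union> (P n \<union> {0})" for n
  have NNcl: "closed (NN n)" for n unfolding NN_def using Pcl by (intro closed_Un frontier_closed) auto
  have NNint: "interior (NN n) = {}" for n
  proof -
    have "interior (P n \<union> {0}) = {}"
      using interior_closed_Un_empty_interior[OF Pcl[of n], of "{0}"] Pint by simp
    thus ?thesis unfolding NN_def
      using interior_closed_Un_empty_interior[OF frontier_closed[of U], of "P n \<union> {0}"]
        interior_frontier_open[OF U] by simp
  qed
  define e where "e n = 1 / (real n + 2)" for n
  define g where "g n = sw.f (NN n) U (e n) (indicator B)" for n
  have sw: "sw (NN n) U (e n) (indicator B)" for n
    unfolding sw_def using NNcl NNint U by (auto simp: NN_def e_def indicator_def)
  have "\<forall>n. swiatkowski (g n)" unfolding g_def using sw.swiat[OF sw] by blast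
  moreover have "(\<lambda>n. g n x) \<longlonglongrightarrow> indicator B x" for x
  proof (cases "\<exists>k. x \<in> NN k")
    case True
    then obtain k where k: "x \<in> NN k" by blast
    have mono: "x \<in> NN n" if "n \<ge> k" for n using k that unfolding NN_def P_def by auto
    have "eventually (\<lambda>n. g n x = indicator B x) sequentially"
      unfolding eventually_sequentially
    proof (intro exI[of _ k] allI impI)
      fix n assume "k \<le> n"
      hence "x \<in> NN n" by (rule mono)
      thus "g n x = indicator B x" unfolding g_def sw.f_def[OF sw] by simp
    qed
    thus ?thesis by (rule tendsto_eventually)
  next
    case False
    have xM: "x \<notin> M"
    proof
      assume "x \<in> M"
      then obtain S where S: "S \<in> F" "x \<in> S" using F(3) by auto
      hence "S \<in> range D" using rD unfolding F'_def by auto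
      then obtain k where "S = D k" by blast
      hence "x \<in> NN k" using S(2) closure_subset unfolding NN_def P_def by auto
      thus False using False by blast
    qed
    hence iB: "indicator B x = (indicator U x :: real)" using BUM by (auto simp: indicator_def)
    have bnd: "\<bar>g n x - indicator U x\<bar> < e n" for n
    proof -
      have xn: "x \<notin> NN n" using False by blast
      show ?thesis
      proof (cases "x \<in> U")
        case True
        thus ?thesis using sw.f_inU[OF sw xn True] unfolding g_def by (simp add: indicator_def)
      next
        case False
        thus ?thesis using sw.f_outU[OF sw xn False] unfolding g_def by (simp add: indicator_def)
      qed
    qed
    show ?thesis unfolding iB lim_sequentially
    proof (intro allI impI)
      fix r :: real assume r: "r > 0"
      obtain k :: nat where k: "k > 0" "inverse (real k) < r" using ex_inverse_of_nat_less r by blast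
      show "\<exists>no. \<forall>n\<ge>no. dist (g n x) (indicator U x) < r"
      proof (intro exI allI impI)
        fix n assume nk: "n \<ge> k"
        have "real k \<le> real n + 2" using nk by simp
        hence "e n \<le> inverse (real k)" unfolding e_def using k by (simp add: divide_simps)
        thus "dist (g n x) (indicator U x) < r" using bnd[of n] k unfolding dist_real_def by linarith
      qed
    qed
  qed
  ultimately show ?thesis by blast
qed


end
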